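(* Let $R$ and $S$ be transverse étale equivalence relations on a compact, metrizable, zero-dimensional space $X$. Then the equivalence relation $R\vee S$ on $X$ generated by $R$ and $S$ equals $(r\times s)(R\times_XS)$ and also equals $(r\times s)(S\times_XR)$, and the maps $r\times s:R\times_XS\to R\vee S$ and $r\times s:S\times_XR\to R\vee S$ are bijections.
   Context: An étale equivalence relation on $X$ is a countable equivalence relation $R\subset X\times X$ with a locally compact, Hausdorff, second countable topology in which the product $(x,y)\cdot(y,z)=(x,z)$ of composable pairs is continuous, the inverse is a homeomorphism, and the range map $r(x,y)=x$ is a local homeomorphism. For equivalence relations $R,S$ on $X$, $R\times_XS=\{((x,y),(y,z)):(x,y)\in R,(y,z)\in S\}$ with the relative topology from $R\times S$, and $r((x,y),(y,z))=x$, $s((x,y),(y,z))=z$, $(r\times s)((x,y),(y,z))=(x,z)$. $R$ and $S$ are transverse if $R\cap S=\Delta_X=\{(x,x):x\in X\}$ and there is a homeomorphism $h:R\times_XS\to S\times_XR$ with $r\circ h=r$ and $s\circ h=s$. *)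

theory Defs
  imports "HOL-Analysis.Analysis"
begin

definition fib_prod :: "('a \<times> 'a) set \<Rightarrow> ('a \<times> 'a) set \<Rightarrow> (('a \<times> 'a) \<times> ('a \<times> 'a)) set" where
  "fib_prod R S = {(p, q). p \<in> R \<and> q \<in> S \<and> snd p = fst q}"

definition fib_top :: "('a \<times> 'a) topology \<Rightarrow> ('a \<times> 'a) topology \<Rightarrow> (('a \<times> 'a) \<times> ('a \<times> 'a)) topology" where
  "fib_top TR TS = subtopology (prod_topology TR TS) (fib_prod (topspace TR) (topspace TS))"

definition fr :: "(('a \<times> 'a) \<times> ('a \<times> 'a)) \<Rightarrow> 'a" where "fr a = fst (fst a)"
definition fs :: "(('a \<times> 'a) \<times> ('a \<times> 'a)) \<Rightarrow> 'a" where "fs a = snd (snd a)"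
definition rs :: "(('a \<times> 'a) \<times> ('a \<times> 'a)) \<Rightarrow> 'a \<times> 'a" where "rs a = (fr a, fs a)"

definition local_homeomorphism_map :: "'b topology \<Rightarrow> 'c topology \<Rightarrow> ('b \<Rightarrow> 'c) \<Rightarrow> bool" where
  "local_homeomorphism_map T U f \<longleftrightarrow>
     (\<forall>p \<in> topspace T. \<exists>V. openin T V \<and> p \<in> V \<and> openin U (f ` V) \<and>
        homeomorphic_map (subtopology T V) (subtopology U (f ` V)) f)"

text \<open>R (with its own topology TR, whose underlying set is R) is an etale
  equivalence relation on the space TX.\<close>
definition etale_equiv_rel :: "'a topology \<Rightarrow> ('a \<times> 'a) topology \<Rightarrow> bool" where
  "etale_equiv_rel TX TR \<longleftrightarrow>
     equiv (topspace TX) (topspace TR) \<and>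
     (\<forall>x \<in> topspace TX. countable {y. (x, y) \<in> topspace TR}) \<and>
     locally_compact_space TR \<and> Hausdorff_space TR \<and> second_countable TR \<and>
     continuous_map (fib_top TR TR) TR rs \<and>
     homeomorphic_map TR TR (\<lambda>(x, y). (y, x)) \<and>
     local_homeomorphism_map TR TX fst"

definition transverse :: "'a topology \<Rightarrow> ('a \<times> 'a) topology \<Rightarrow> ('a \<times> 'a) topology \<Rightarrow> bool" where
  "transverse TX TR TS \<longleftrightarrow>
     topspace TR \<inter> topspace TS = Id_on (topspace TX) \<and>
     (\<exists>h. homeomorphic_map (fib_top TR TS) (fib_top TS TR) h \<and>
          (\<forall>a \<in> fib_prod (topspace TR) (topspace TS). fr (h a) = fr a \<and> fs (h a) = fs a))"

definition equiv_join :: "'a set \<Rightarrow> ('a \<times> 'a) set \<Rightarrow> ('a \<times> 'a) set \<Rightarrow> ('a \<times> 'a) set" where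
  "equiv_join X R S = \<Inter>{E. equiv X E \<and> R \<subseteq> E \<and> S \<subseteq> E}"

end

theory Submission
  imports Defs
begin

lemma rs_img: "rs ` fib_prod A B = A O B"
  unfolding fib_prod_def rs_def fr_def fs_def by (force simp: relcomp.simps)

lemma inj_rs:
  assumes "equiv X A" "equiv X B" "A \<inter> B = Id_on X"
  shows "inj_on rs (fib_prod A B)"
proof (rule inj_onI)
  fix p q assume p: "p \<in> fib_prod A B" and q: "q \<in> fib_prod A B" and e: "rs p = rs q"
  obtain x y z where P: "p = ((x,y),(y,z))" "(x,y) \<in> A" "(y,z) \<in> B"
    using p unfolding fib_prod_def by force
  obtain x' y' z' where Q: "q = ((x',y'),(y',z'))" "(x',y') \<in> A" "(y',z') \<in> B"
    using q unfolding fib_prod_def by force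
  have xz: "x' = x" "z' = z" using e P Q by (auto simp: rs_def fr_def fs_def)
  have "(y,y') \<in> A" using P Q xz assms(1) unfolding equiv_def by (metis symD transD)
  moreover have "(y,y') \<in> B" using P Q xz assms(2) unfolding equiv_def by (metis symD transD)
  ultimately have "(y,y') \<in> Id_on X" using assms(3) by blast
  hence "y = y'" by (auto simp: Id_on_def)
  then show "p = q" using P Q xz by simp
qed

theorem lemma3p2:
  fixes TX :: "'a topology" and TR TS :: "('a \<times> 'a) topology"
  assumes "compact_space TX" and "metrizable_space TX" and "TX dim_le 0"
    and "etale_equiv_rel TX TR" and "etale_equiv_rel TX TS"
    and "transverse TX TR TS"
  shows "equiv_join (topspace TX) (topspace TR) (topspace TS) = rs ` fib_prod (topspace TR) (topspace TS)
    \<and> equiv_join (topspace TX) (topspace TR) (topspace TS) = rs ` fib_prod (topspace TS) (topspace TR)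
    \<and> bij_betw rs (fib_prod (topspace TR) (topspace TS)) (equiv_join (topspace TX) (topspace TR) (topspace TS))
    \<and> bij_betw rs (fib_prod (topspace TS) (topspace TR)) (equiv_join (topspace TX) (topspace TR) (topspace TS))"
proof -
  define X where "X = topspace TX"
  define R where "R = topspace TR"
  define S where "S = topspace TS"
  have eR: "equiv X R" using assms(4) unfolding etale_equiv_rel_def X_def R_def by blast
  have eS: "equiv X S" using assms(5) unfolding etale_equiv_rel_def X_def S_def by blast
  have I: "R \<inter> S = Id_on X" using assms(6) unfolding transverse_def X_def R_def S_def by blast
  obtain h where hh: "homeomorphic_map (fib_top TR TS) (fib_top TS TR) h"
     and hp: "\<forall>a \<in> fib_prod R S. fr (h a) = fr a \<and> fs (h a) = fs a"
    using assms(6) unfolding transverse_def R_def S_def by blast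
  have ts1: "topspace (fib_top TR TS) = fib_prod R S"
    unfolding fib_top_def R_def S_def fib_prod_def by auto
  have ts2: "topspace (fib_top TS TR) = fib_prod S R"
    unfolding fib_top_def R_def S_def fib_prod_def by auto
  have himg: "h ` fib_prod R S = fib_prod S R"
    using homeomorphic_imp_surjective_map[OF hh] ts1 ts2 by simp
  have "rs ` fib_prod S R = rs ` fib_prod R S"
  proof -
    have "rs ` fib_prod S R = (rs \<circ> h) ` fib_prod R S" using himg by (metis image_comp)
    also have "\<dots> = rs ` fib_prod R S"
      by (rule image_cong) (use hp in \<open>auto simp: rs_def\<close>)
    finally show ?thesis .
  qed
  hence comm: "S O R = R O S" by (simp add: rs_img)
  have eRS: "equiv X (R O S)"
  proof (rule equivI)
    show "refl_on X (R O S)"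
      using eR eS unfolding equiv_def refl_on_def by blast
    show "sym (R O S)"
    proof (rule symI)
      fix a b assume "(a,b) \<in> R O S"
      hence "(b,a) \<in> S O R" using eR eS unfolding equiv_def by (auto dest: symD)
      thus "(b,a) \<in> R O S" using comm by simp
    qed
    show "trans (R O S)"
    proof (rule transI)
      fix a b c assume ab: "(a,b) \<in> R O S" and bc: "(b,c) \<in> R O S"
      then obtain u v where "(a,u) \<in> R" "(u,b) \<in> S" "(b,v) \<in> R" "(v,c) \<in> S" by blast
      hence "(u,v) \<in> S O R" by blast
      hence "(u,v) \<in> R O S" using comm by simp
      then obtain w where "(u,w) \<in> R" "(w,v) \<in> S" by blast
      have "(a,w) \<in> R" using \<open>(a,u) \<in> R\<close> \<open>(u,w) \<in> R\<close> eR unfolding equiv_def by (meson transD)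
      moreover have "(w,c) \<in> S" using \<open>(w,v) \<in> S\<close> \<open>(v,c) \<in> S\<close> eS unfolding equiv_def by (meson transD)
      ultimately show "(a,c) \<in> R O S" by blast
    qed
    show "R O S \<subseteq> X \<times> X" using eR eS unfolding equiv_def by blast
  qed
  have sub1: "R \<subseteq> R O S" using eR eS unfolding equiv_def refl_on_def by blast
  have sub2: "S \<subseteq> R O S" using eR eS unfolding equiv_def refl_on_def by blast
  have J: "equiv_join X R S = R O S"
  proof
    show "equiv_join X R S \<subseteq> R O S" unfolding equiv_join_def using eRS sub1 sub2 by blast
    show "R O S \<subseteq> equiv_join X R S" unfolding equiv_join_def equiv_def
      by (auto dest: transD)
  qed
  have i1: "inj_on rs (fib_prod R S)" by (rule inj_rs[OF eR eS I])
  have i2: "inj_on rs (fib_prod S R)" by (rule inj_rs[OF eS eR]) (use I in blast)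
  show ?thesis
    unfolding X_def[symmetric] R_def[symmetric] S_def[symmetric]
    using J i1 i2 comm by (simp add: rs_img bij_betw_def)
qed

end
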